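(* Let $R$ be a discrete $\Gamma$-ring, $r\in R[2]$ a formal difference law, $n\ge0$, and $f:[2^n]\to[k]$ a pointed map with $f(\pm1_n)=(n_1,\dots,n_k)\in H\mathbb Z[k]$. Let $S\subseteq\{1,\dots,2^n\}$ be a subset such that for each $m\in\{1,\dots,k\}$ the set $S\cap f^{-1}(m)$ consists of exactly $|n_m|$ elements, all of which carry the sign of $n_m$ in $\pm1_n$ (i.e. lie in $A_+$ if $n_m>0$ and in $A_-$ if $n_m<0$). Let $g:[2^n]\to[k]$ be the pointed map which agrees with $f$ on $S$ and sends all other elements to $0$. Then $f(r^n)=g(r^n)$ in $R[k]$.
   Context: Let $[n]=\{0,1,\dots,n\}$, pointed at $0$. A $\Gamma$-space is a functor $F$ from the finite pointed sets $[n]$ (with pointed maps) to pointed simplicial sets with $F[0]$ a point; for a pointed map $f$ we write $f$ also for $F(f)$; $\Sigma_n$ acts on $F[n]$ via permutations of $\{1,\dots,n\}$. We identify $[n]\wedge[m]$ with $[nm]$ via $i\wedge j\mapsto (j-1)n+i$. A $\Gamma$-ring is a $\Gamma$-space $R$ with unit $1\in R[1]$ and associative unital multiplication given by natural maps $R(K)\wedge R(L)\to R(K\wedge L)$, $p\wedge q\mapsto pq$; it is discrete if all $R(K)$ are sets; $0\in R[1]$ denotes the basepoint. For $x\in R[2]$, $x^k\in R[2^k]$ is the $k$-fold product. Maps: $p^n_i:[n]\to[n-1]$, $p^n_i(j)=j$ ($j<i$), $p^n_i(i)=0$, $p^n_i(j)=j-1$ ($j>i$); for $1\le i<j\le n$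 and $1\le k\le n-1$, $s^n_{i,j,k}:[n]\to[n-1]$ sends $0\mapsto0$, $i,j\mapsto k$, and the remaining elements order-preservingly and bijectively onto $\{1,\dots,n-1\}\setminus\{k\}$; $d^n_j:[n-1]\to[n]$ is the order-preserving injection missing $j$. $H\mathbb{Z}(K)$ is the reduced free abelian group on $K$ (so $H\mathbb Z[k]=\mathbb Z^k$), pointed maps acting by summing coefficients along fibres, with multiplication $(\sum a_k k)(\sum b_l l)=\sum a_kb_l (k\wedge l)$; $\pm1_n=(1,-1)^n\in H\mathbb{Z}[2^n]$. For $k\ge1$, split $\{1,\dots,2^k\}=A_+\sqcup A_-$ where $i\in A_+$ iff the binary expansion of $i-1$ has an even number of digits $1$; $\pm1_k$ has entry $+1$ on $A_+$ and $-1$ on $A_-$. The special action of $\Sigma_{2^{k-1}}\times\Sigma_{2^{k-1}}$ on $F[2^k]$ is the action of the group of permutations of $\{1,\dots,2^k\}$ preserving $A_+$ and $A_-$. Let $\sigma$ be the nontrivial element of $\Sigma_2$. A formal difference law in $R$ is $r\in R[2]$ such that: (1) $p^2_2(r)=1$ and $s^2_{1,2,1}(r)=0$; (2) $p^2_1(r)\,r=r\,p^2_1(r)=\sigma(r)$ in $R[2]$; (3) for every $k\ge1$, $r^k$ is fixed under the special action; (4) for every $k\ge1$, all $1\le i<j\le 2^k$ with one of $i,j$ in $A_+$ and the other in $A_-$, and all $1\le l\le 2^k-1$: $s^{2^k}_{i,j,l}(r^k)=d^{2^k-1}_l\,p^{2^k-1}_i\,p^{2^k}_j(r^k)$. *)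

theory Defs
  imports Main
begin

text \<open>A pointed map [n] -> [m] is represented by a function nat => nat that
  sends 0 to 0 and {0..n} into {0..m}; values outside {0..n} are irrelevant
  (the Gamma-space axioms below require the action to depend only on them).\<close>

definition pmap :: "nat \<Rightarrow> nat \<Rightarrow> (nat \<Rightarrow> nat) \<Rightarrow> bool" where
  "pmap n m f \<longleftrightarrow> f 0 = 0 \<and> (\<forall>i\<le>n. f i \<le> m)"

text \<open>Smash product of pointed maps f:[n]->[m], g:[n']->[m'], using the
  identification [n] smash [n'] = [n n'] via i smash j |-> (j-1) n + i.\<close>

definition smash_map :: "nat \<Rightarrow> nat \<Rightarrow> (nat \<Rightarrow> nat) \<Rightarrow> (nat \<Rightarrow> nat) \<Rightarrow> nat \<Rightarrow> nat" where
  "smash_map n m f g x =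
     (if x = 0 then 0
      else (let i = (x - 1) mod n + 1; j = (x - 1) div n + 1 in
            if f i = 0 \<or> g j = 0 then 0 else (g j - 1) * m + f i))"

record 'a gamma_ring =
  carr :: "nat \<Rightarrow> 'a set"                          (* R[n] *)
  base :: "nat \<Rightarrow> 'a"
  act  :: "nat \<Rightarrow> nat \<Rightarrow> (nat \<Rightarrow> nat) \<Rightarrow> 'a \<Rightarrow> 'a"   (* R(f) : R[n] -> R[m] *)
  one  :: 'a                                      (* unit in R[1] *)
  mul  :: "nat \<Rightarrow> nat \<Rightarrow> 'a \<Rightarrow> 'a \<Rightarrow> 'a"          (* R[n] smash R[m] -> R[n m] *)

definition discrete_gamma_space :: "'a gamma_ring \<Rightarrow> bool" where
  "discrete_gamma_space R \<longleftrightarrow>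
     (\<forall>n. base R n \<in> carr R n) \<and>
     carr R 0 = {base R 0} \<and>
     (\<forall>n m f x. pmap n m f \<longrightarrow> x \<in> carr R n \<longrightarrow> act R n m f x \<in> carr R m) \<and>
     (\<forall>n m f. pmap n m f \<longrightarrow> act R n m f (base R n) = base R m) \<and>
     (\<forall>n m f f' x. pmap n m f \<longrightarrow> (\<forall>i\<le>n. f i = f' i) \<longrightarrow> x \<in> carr R n \<longrightarrow>
        act R n m f x = act R n m f' x) \<and>
     (\<forall>n x. x \<in> carr R n \<longrightarrow> act R n n id x = x) \<and>
     (\<forall>n m l f g x. pmap n m f \<longrightarrow> pmap m l g \<longrightarrow> x \<in> carr R n \<longrightarrow>
        act R n l (g \<circ> f) x = act R m l g (act R n m f x))"

definition discrete_gamma_ring :: "'a gamma_ring \<Rightarrow> bool" where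
  "discrete_gamma_ring R \<longleftrightarrow>
     discrete_gamma_space R \<and>
     one R \<in> carr R 1 \<and>
     (\<forall>n m x y. x \<in> carr R n \<longrightarrow> y \<in> carr R m \<longrightarrow> mul R n m x y \<in> carr R (n * m)) \<and>
     (\<forall>n m y. y \<in> carr R m \<longrightarrow> mul R n m (base R n) y = base R (n * m)) \<and>
     (\<forall>n m x. x \<in> carr R n \<longrightarrow> mul R n m x (base R m) = base R (n * m)) \<and>
     (\<forall>n n' m m' f g x y. pmap n n' f \<longrightarrow> pmap m m' g \<longrightarrow>
        x \<in> carr R n \<longrightarrow> y \<in> carr R m \<longrightarrow>
        mul R n' m' (act R n n' f x) (act R m m' g y)
          = act R (n * m) (n' * m') (smash_map n n' f g) (mul R n m x y)) \<and>
     (\<forall>n m l x y z. x \<in> carr R n \<longrightarrow> y \<in> carr R m \<longrightarrow> z \<in> carr R l \<longrightarrow>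
        mul R (n * m) l (mul R n m x y) z = mul R n (m * l) x (mul R m l y z)) \<and>
     (\<forall>n x. x \<in> carr R n \<longrightarrow> mul R 1 n (one R) x = x \<and> mul R n 1 x (one R) = x)"

primrec gpow :: "'a gamma_ring \<Rightarrow> 'a \<Rightarrow> nat \<Rightarrow> 'a" where
  "gpow R x 0 = one R"
| "gpow R x (Suc k) = mul R (2 ^ k) 2 (gpow R x k) x"

definition p_map :: "nat \<Rightarrow> nat \<Rightarrow> nat" where
  "p_map i j = (if j < i then j else if j = i then 0 else j - 1)"

text \<open>s^n_{i,j,k}: 0 |-> 0, i,j |-> k, the other elements (rank t among
  {1..n} minus {i,j}) go order-preservingly onto {1..n-1} minus {k}.\<close>

definition s_map :: "nat \<Rightarrow> nat \<Rightarrow> nat \<Rightarrow> nat \<Rightarrow> nat \<Rightarrow> nat" where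
  "s_map n i j k x =
     (if x = 0 then 0
      else if x = i \<or> x = j then k
      else (let t = x - card {y \<in> {i, j}. y < x} in if t < k then t else t + 1))"

definition d_map :: "nat \<Rightarrow> nat \<Rightarrow> nat" where
  "d_map j x = (if x < j then x else x + 1)"

definition swap2 :: "nat \<Rightarrow> nat" where
  "swap2 x = (if x = 1 then 2 else if x = 2 then 1 else x)"

fun bitcount :: "nat \<Rightarrow> nat" where
  "bitcount n = (if n = 0 then 0 else n mod 2 + bitcount (n div 2))"

definition A_plus :: "nat \<Rightarrow> nat set" where
  "A_plus k = {i \<in> {1..2 ^ k}. even (bitcount (i - 1))}"

definition A_minus :: "nat \<Rightarrow> nat set" where
  "A_minus k = {i \<in> {1..2 ^ k}. odd (bitcount (i - 1))}"

definition special_perm :: "nat \<Rightarrow> (nat \<Rightarrow> nat) \<Rightarrow> bool" where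
  "special_perm k \<pi> \<longleftrightarrow> \<pi> 0 = 0 \<and> bij_betw \<pi> {1..2 ^ k} {1..2 ^ k} \<and>
     \<pi> ` A_plus k = A_plus k \<and> \<pi> ` A_minus k = A_minus k"

text \<open>Coefficients of +-1_n in HZ[2^n] = Z^(2^n): +1 on A_+, -1 on A_-.\<close>

definition pm_one :: "nat \<Rightarrow> nat \<Rightarrow> int" where
  "pm_one n i = (if i \<in> A_plus n then 1 else if i \<in> A_minus n then -1 else 0)"

definition HZ_act :: "nat \<Rightarrow> (nat \<Rightarrow> nat) \<Rightarrow> (nat \<Rightarrow> int) \<Rightarrow> nat \<Rightarrow> int" where
  "HZ_act N f v m = (\<Sum>i\<in>{i \<in> {1..N}. f i = m}. v i)"

definition formal_difference_law :: "'a gamma_ring \<Rightarrow> 'a \<Rightarrow> bool" where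
  "formal_difference_law R r \<longleftrightarrow>
     r \<in> carr R 2 \<and>
     act R 2 1 (p_map 2) r = one R \<and>
     act R 2 1 (s_map 2 1 2 1) r = base R 1 \<and>
     mul R 1 2 (act R 2 1 (p_map 1) r) r = act R 2 2 swap2 r \<and>
     mul R 2 1 r (act R 2 1 (p_map 1) r) = act R 2 2 swap2 r \<and>
     (\<forall>k\<ge>1. \<forall>\<pi>. special_perm k \<pi> \<longrightarrow>
        act R (2 ^ k) (2 ^ k) \<pi> (gpow R r k) = gpow R r k) \<and>
     (\<forall>k\<ge>1. \<forall>i j l. 1 \<le> i \<longrightarrow> i < j \<longrightarrow> j \<le> 2 ^ k \<longrightarrow>
        ((i \<in> A_plus k \<and> j \<in> A_minus k) \<or> (i \<in> A_minus k \<and> j \<in> A_plus k)) \<longrightarrow>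
        1 \<le> l \<longrightarrow> l \<le> 2 ^ k - 1 \<longrightarrow>
        act R (2 ^ k) (2 ^ k - 1) (s_map (2 ^ k) i j l) (gpow R r k)
          = act R (2 ^ k - 2) (2 ^ k - 1) (d_map l)
              (act R (2 ^ k - 1) (2 ^ k - 2) (p_map i)
                 (act R (2 ^ k) (2 ^ k - 1) (p_map j) (gpow R r k))))"

end

theory Submission
  imports Defs
begin


lemma gpow_carr:
  assumes "discrete_gamma_ring R" "r \<in> carr R 2"
  shows "gpow R r n \<in> carr R (2 ^ n)"
proof (induction n)
  case 0 then show ?case using assms by (simp add: discrete_gamma_ring_def)
next
  case (Suc n)
  have "mul R (2 ^ n) 2 (gpow R r n) r \<in> carr R (2 ^ n * 2)"
    using assms Suc by (simp add: discrete_gamma_ring_def)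
  then show ?case by (simp add: mult.commute)
qed

definition inv_s :: "nat \<Rightarrow> nat \<Rightarrow> nat \<Rightarrow> nat" where
  "inv_s i j t = (if t < i then t else if t + 1 < j then t + 1 else t + 2)"

lemma s_map_eq:
  assumes "1 \<le> i" "i < j"
  shows "s_map N i j 1 x = (if x = 0 then 0 else if x = i \<or> x = j then 1
           else if x < i then x + 1 else if x < j then x else x - 1)"
proof -
  have cc: "card {y \<in> {i, j}. y < x} = (if x \<le> i then 0 else if x \<le> j then 1 else 2)"
  proof -
    have "{y \<in> {i, j}. y < x} = (if x \<le> i then {} else if x \<le> j then {i} else {i,j})"
      using assms by auto
    then show ?thesis using assms by auto
  qed
  show ?thesis
    unfolding s_map_def Let_def cc
    using assms by auto
qed

lemma kill_ord:
  assumes DR: "discrete_gamma_ring R" and FD: "formal_difference_law R r"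
    and h: "pmap (2 ^ n) k h"
    and ij: "1 \<le> i" "i < j" "j \<le> 2 ^ n"
    and sg: "(i \<in> A_plus n \<and> j \<in> A_minus n) \<or> (i \<in> A_minus n \<and> j \<in> A_plus n)"
    and hij: "h i = h j"
  shows "act R (2 ^ n) k h (gpow R r n)
       = act R (2 ^ n) k (\<lambda>x. if x = i \<or> x = j then 0 else h x) (gpow R r n)"
proof -
  define N where "N = (2::nat) ^ n"
  have n1: "n \<ge> 1" using ij by (cases n) auto
  have N2: "N \<ge> 2" using ij N_def by simp
  define X where "X = gpow R r n"
  have GS: "discrete_gamma_space R" using DR by (simp add: discrete_gamma_ring_def)
  have X: "X \<in> carr R N" using gpow_carr[OF DR] FD by (simp add: X_def N_def formal_difference_law_def)
  have comp: "\<And>n m l f g x. pmap n m f \<Longrightarrow> pmap m l g \<Longrightarrow> x \<in> carr R n \<Longrightarrow>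
        act R n l (g \<circ> f) x = act R m l g (act R n m f x)"
    using GS unfolding discrete_gamma_space_def by blast
  have cong: "\<And>n m f f' x. pmap n m f \<Longrightarrow> (\<forall>i\<le>n. f i = f' i) \<Longrightarrow> x \<in> carr R n \<Longrightarrow>
        act R n m f x = act R n m f' x"
    using GS unfolding discrete_gamma_space_def by blast
  have incarr: "\<And>n m f x. pmap n m f \<Longrightarrow> x \<in> carr R n \<Longrightarrow> act R n m f x \<in> carr R m"
    using GS unfolding discrete_gamma_space_def by blast
  have ax: "act R N (N - 1) (s_map N i j 1) X
          = act R (N - 2) (N - 1) (d_map 1) (act R (N - 1) (N - 2) (p_map i)
                 (act R N (N - 1) (p_map j) X))"
    using FD n1 ij sg N2 unfolding formal_difference_law_def N_def X_def by auto
  define ht where "ht y = (if y = 0 then 0 else if y = 1 then h i else h (inv_s i j (y - 1)))" for y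
  have hp: "h 0 = 0" "\<And>x. x \<le> N \<Longrightarrow> h x \<le> k" using h by (auto simp: pmap_def N_def)
  have pj: "pmap N (N - 1) (p_map j)" using ij by (auto simp: pmap_def p_map_def N_def)
  have pi: "pmap (N - 1) (N - 2) (p_map i)" using ij N_def by (auto simp: pmap_def p_map_def)
  have pd: "pmap (N - 2) (N - 1) (d_map 1)" using N2 by (auto simp: pmap_def d_map_def)
  have ps: "pmap N (N - 1) (s_map N i j 1)" unfolding pmap_def s_map_eq[OF ij(1,2)] using ij N2 N_def by auto
  have pht: "pmap (N - 1) k ht"
    unfolding pmap_def ht_def using hp ij N_def by (auto simp: inv_s_def)
  have e1: "act R N k h X = act R N k (ht \<circ> s_map N i j 1) X"
  proof (rule cong)
    show "pmap N k h" using h N_def by simp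
    show "X \<in> carr R N" using X .
    show "\<forall>x\<le>N. h x = (ht \<circ> s_map N i j 1) x"
    proof (intro allI impI)
      fix x assume "x \<le> N"
      show "h x = (ht \<circ> s_map N i j 1) x"
      proof (cases "x = 0 \<or> x = i \<or> x = j")
        case True then show ?thesis
          unfolding comp_def s_map_eq[OF ij(1,2)] ht_def using hij hp(1) by auto
      next
        case False
        have k1: "s_map N i j 1 x \<ge> 2" unfolding s_map_eq[OF ij(1,2)] using False ij by auto
        have k2: "inv_s i j (s_map N i j 1 x - 1) = x"
          unfolding s_map_eq[OF ij(1,2)] inv_s_def using False ij by auto
        show ?thesis unfolding comp_def ht_def using k1 k2 by auto
      qed
    qed
  qed
  also have "\<dots> = act R (N - 1) k ht (act R N (N - 1) (s_map N i j 1) X)"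
    by (rule comp[OF ps pht X])
  also have "\<dots> = act R (N - 1) k ht (act R (N - 2) (N - 1) (d_map 1) (act R (N - 1) (N - 2) (p_map i)
                 (act R N (N - 1) (p_map j) X)))" using ax by simp
  also have "\<dots> = act R N k (ht \<circ> d_map 1 \<circ> p_map i \<circ> p_map j) X"
  proof -
    have Y1: "act R N (N - 1) (p_map j) X \<in> carr R (N - 1)" using incarr[OF pj X] .
    have Y2: "act R (N - 1) (N - 2) (p_map i) (act R N (N - 1) (p_map j) X) \<in> carr R (N - 2)"
      using incarr[OF pi Y1] .
    have pc1: "pmap (N - 2) k (ht \<circ> d_map 1)" using pd pht by (auto simp: pmap_def)
    have pc2: "pmap (N - 1) k (ht \<circ> d_map 1 \<circ> p_map i)" using pc1 pi by (auto simp: pmap_def)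
    show ?thesis
      unfolding comp[OF pj pc2 X] comp[OF pi pc1 Y1] comp[OF pd pht Y2] by (rule refl)
  qed
  also have "\<dots> = act R N k (\<lambda>x. if x = i \<or> x = j then 0 else h x) X"
  proof (rule cong)
    show "pmap N k (ht \<circ> d_map 1 \<circ> p_map i \<circ> p_map j)"
      using pd pht pi pj by (auto simp: pmap_def)
    show "X \<in> carr R N" using X .
    show "\<forall>x\<le>N. (ht \<circ> d_map 1 \<circ> p_map i \<circ> p_map j) x = (if x = i \<or> x = j then 0 else h x)"
    proof (intro allI impI)
      fix x assume "x \<le> N"
      show "(ht \<circ> d_map 1 \<circ> p_map i \<circ> p_map j) x = (if x = i \<or> x = j then 0 else h x)"
      proof (cases "x = 0 \<or> x = i \<or> x = j")
        case True then show ?thesis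
          unfolding comp_def ht_def d_map_def p_map_def using ij hp(1) by auto
      next
        case False
        have k1: "d_map 1 (p_map i (p_map j x)) \<ge> 2" unfolding d_map_def p_map_def using False ij by auto
        have k2: "inv_s i j (d_map 1 (p_map i (p_map j x)) - 1) = x"
          unfolding d_map_def p_map_def inv_s_def using False ij by auto
        show ?thesis unfolding comp_def ht_def using k1 k2 False by auto
      qed
    qed
  qed
  finally show ?thesis by (simp add: N_def X_def)
qed
lemma A_facts:
  "x \<in> A_plus n \<Longrightarrow> x \<notin> A_minus n"
  "x \<in> {1..2^n} \<Longrightarrow> x \<in> A_plus n \<or> x \<in> A_minus n"
  "A_plus n \<subseteq> {1..2^n}" "A_minus n \<subseteq> {1..2^n}"
  by (auto simp: A_plus_def A_minus_def simp del: bitcount.simps)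

lemma kill:
  assumes DR: "discrete_gamma_ring R" and FD: "formal_difference_law R r"
    and h: "pmap (2 ^ n) k h"
    and ij: "i \<in> A_plus n" "j \<in> A_minus n"
    and hij: "h i = h j"
  shows "act R (2 ^ n) k h (gpow R r n)
       = act R (2 ^ n) k (\<lambda>x. if x = i \<or> x = j then 0 else h x) (gpow R r n)"
proof -
  have ne: "i \<noteq> j" using ij A_facts(1) by blast
  have b: "1 \<le> i" "i \<le> 2^n" "1 \<le> j" "j \<le> 2^n" using ij A_facts(3,4)[of n] by (auto simp del: bitcount.simps)
  show ?thesis
  proof (cases "i < j")
    case True
    have sg: "(i \<in> A_plus n \<and> j \<in> A_minus n) \<or> (i \<in> A_minus n \<and> j \<in> A_plus n)"
      using ij by simp
    show ?thesis by (rule kill_ord[OF DR FD h b(1) True b(4) sg hij])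
  next
    case False
    then have ji: "j < i" using ne by simp
    have sg: "(j \<in> A_plus n \<and> i \<in> A_minus n) \<or> (j \<in> A_minus n \<and> i \<in> A_plus n)"
      using ij by simp
    have "act R (2 ^ n) k h (gpow R r n)
       = act R (2 ^ n) k (\<lambda>x. if x = j \<or> x = i then 0 else h x) (gpow R r n)"
      by (rule kill_ord[OF DR FD h b(3) ji b(2) sg hij[symmetric]])
    moreover have "(\<lambda>x. if x = j \<or> x = i then 0 else h x) = (\<lambda>x. if x = i \<or> x = j then 0 else h x)"
      by (rule ext) simp
    ultimately show ?thesis by simp
  qed
qed


declare bitcount.simps[simp del]

lemma main:
  assumes DR: "discrete_gamma_ring R" and FD: "formal_difference_law R r"
    and S: "S \<subseteq> {1..2^n}"
  shows "\<And>h. card {x\<in>{1..2^n}. x \<notin> S \<and> h x \<noteq> 0} = c \<Longrightarrow> pmap (2^n) k h \<Longrightarrow>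
     (\<forall>x\<in>S. h x = f x) \<Longrightarrow>
     (\<forall>m. m \<noteq> 0 \<longrightarrow> card {x\<in>{1..2^n}. x \<notin> S \<and> h x = m \<and> x \<in> A_plus n}
                          = card {x\<in>{1..2^n}. x \<notin> S \<and> h x = m \<and> x \<in> A_minus n}) \<Longrightarrow>
     act R (2^n) k h (gpow R r n) = act R (2^n) k (\<lambda>i. if i \<in> S then f i else 0) (gpow R r n)"
proof (induction c rule: less_induct)
  case (less c h)
  have GS: "discrete_gamma_space R" using DR by (simp add: discrete_gamma_ring_def)
  have X: "gpow R r n \<in> carr R (2^n)" using gpow_carr[OF DR] FD by (simp add: formal_difference_law_def)
  have cong: "\<And>n m f f' x. pmap n m f \<Longrightarrow> (\<forall>i\<le>n. f i = f' i) \<Longrightarrow> x \<in> carr R n \<Longrightarrow>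
        act R n m f x = act R n m f' x"
    using GS unfolding discrete_gamma_space_def by blast
  define T where "T = {x\<in>{1..2^n}. x \<notin> S \<and> h x \<noteq> 0}"
  have fT: "finite T" unfolding T_def by simp
  show ?case
  proof (cases "T = {}")
    case True
    show ?thesis
    proof (rule cong[OF less.prems(2) _ X], intro allI impI)
      fix x :: nat assume "x \<le> 2^n"
      show "h x = (if x \<in> S then f x else 0)"
        using True less.prems(2,3) S \<open>x \<le> 2^n\<close> unfolding T_def pmap_def
        by (cases "x = 0") auto
    qed
  next
    case False
    then obtain x0 where x0: "x0 \<in> T" by auto
    define m where "m = h x0"
    have m0: "m \<noteq> 0" using x0 unfolding T_def m_def by auto
    define P where "P = {x\<in>{1..2^n}. x \<notin> S \<and> h x = m \<and> x \<in> A_plus n}"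
    define M where "M = {x\<in>{1..2^n}. x \<notin> S \<and> h x = m \<and> x \<in> A_minus n}"
    have PM: "card P = card M" using less.prems(4) m0 unfolding P_def M_def by blast
    have "P \<noteq> {} \<or> M \<noteq> {}"
      using x0 A_facts(2)[of x0 n] unfolding T_def m_def P_def M_def by auto
    then have "P \<noteq> {} \<and> M \<noteq> {}"
    proof -
      have fP: "finite P" "finite M" unfolding P_def M_def by auto
      show ?thesis using PM fP \<open>P \<noteq> {} \<or> M \<noteq> {}\<close> by (metis card_0_eq)
    qed
    then obtain i j where i: "i \<in> P" and j: "j \<in> M" by blast
    define h' where "h' = (\<lambda>x. if x = i \<or> x = j then 0 else h x)"
    have ij: "i \<in> A_plus n" "j \<in> A_minus n" "h i = h j" using i j unfolding P_def M_def by auto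
    have e1: "act R (2^n) k h (gpow R r n) = act R (2^n) k h' (gpow R r n)"
      unfolding h'_def by (rule kill[OF DR FD less.prems(2) ij])
    have T': "{x\<in>{1..2^n}. x \<notin> S \<and> h' x \<noteq> 0} = T - {i, j}"
      unfolding T_def h'_def by auto
    have ijT: "i \<in> T" "j \<in> T" "i \<noteq> j" using i j m0 A_facts(1)[of i n] unfolding T_def P_def M_def by auto
    have cT: "card (T - {i,j}) < c"
    proof -
      have "card (T - {i,j}) < card T"
        using fT ijT by (intro psubset_card_mono) auto
      then show ?thesis using less.prems(1) T_def by simp
    qed
    have p': "pmap (2^n) k h'" using less.prems(2) unfolding pmap_def h'_def by auto
    have S': "\<forall>x\<in>S. h' x = f x" using less.prems(3) ijT unfolding h'_def T_def by auto
    have B': "\<forall>m'. m' \<noteq> 0 \<longrightarrow> card {x\<in>{1..2^n}. x \<notin> S \<and> h' x = m' \<and> x \<in> A_plus n}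
                          = card {x\<in>{1..2^n}. x \<notin> S \<and> h' x = m' \<and> x \<in> A_minus n}"
    proof (intro allI impI)
      fix m' :: nat assume m': "m' \<noteq> 0"
      define P' where "P' = {x\<in>{1..2^n}. x \<notin> S \<and> h x = m' \<and> x \<in> A_plus n}"
      define M' where "M' = {x\<in>{1..2^n}. x \<notin> S \<and> h x = m' \<and> x \<in> A_minus n}"
      have e1: "{x\<in>{1..2^n}. x \<notin> S \<and> h' x = m' \<and> x \<in> A_plus n} = P' - {i}"
        unfolding P'_def h'_def using m' ij A_facts(1)[of j n] by auto
      have e2: "{x\<in>{1..2^n}. x \<notin> S \<and> h' x = m' \<and> x \<in> A_minus n} = M' - {j}"
        unfolding M'_def h'_def using m' ij A_facts(1)[of i n] by auto
      have iff: "i \<in> P' \<longleftrightarrow> j \<in> M'" using i j ij unfolding P_def M_def P'_def M'_def by auto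
      have "card P' = card M'" using less.prems(4) m' unfolding P'_def M'_def by blast
      then show "card {x\<in>{1..2^n}. x \<notin> S \<and> h' x = m' \<and> x \<in> A_plus n}
                          = card {x\<in>{1..2^n}. x \<notin> S \<and> h' x = m' \<and> x \<in> A_minus n}"
        unfolding e1 e2 using iff by (simp add: card_Diff_singleton_if)
    qed
    have "act R (2^n) k h' (gpow R r n) = act R (2^n) k (\<lambda>i. if i \<in> S then f i else 0) (gpow R r n)"
      using less.IH[OF cT arg_cong[of _ _ card, OF T'] p' S' B'] .
    then show ?thesis using e1 by simp
  qed
qed

lemma HZ_split:
  "HZ_act (2^n) f (pm_one n) m = int (card {x\<in>{1..2^n}. f x = m \<and> x \<in> A_plus n})
     - int (card {x\<in>{1..2^n}. f x = m \<and> x \<in> A_minus n})"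
proof -
  define FP where "FP = {x\<in>{1..2^n}. f x = m \<and> x \<in> A_plus n}"
  define FM where "FM = {x\<in>{1..2^n}. f x = m \<and> x \<in> A_minus n}"
  have U: "{i \<in> {1..2^n}. f i = m} = FP \<union> FM" unfolding FP_def FM_def using A_facts(2) by blast
  have D: "FP \<inter> FM = {}" unfolding FP_def FM_def using A_facts(1) by blast
  have fin: "finite FP" "finite FM" unfolding FP_def FM_def by auto
  have s1: "sum (pm_one n) FP = int (card FP)"
    using sum.cong[of FP FP "pm_one n" "\<lambda>_. 1"] unfolding FP_def pm_one_def by simp
  have s2: "sum (pm_one n) FM = - int (card FM)"
  proof -
    have "sum (pm_one n) FM = sum (\<lambda>_. -1) FM"
      by (rule sum.cong) (auto simp: FM_def pm_one_def dest: A_facts(1))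
    then show ?thesis by simp
  qed
  show ?thesis unfolding HZ_act_def U sum.union_disjoint[OF fin D] s1 s2
    by (simp add: FP_def FM_def)
qed

theorem lemma3p4p1:
  fixes R :: "'a gamma_ring" and r :: 'a and n k :: nat
    and f :: "nat \<Rightarrow> nat" and S :: "nat set"
  assumes "discrete_gamma_ring R"
    and "formal_difference_law R r"
    and "pmap (2 ^ n) k f"
    and "S \<subseteq> {1..2 ^ n}"
    and "\<forall>m\<in>{1..k}.
           card (S \<inter> {i. f i = m}) = nat \<bar>HZ_act (2 ^ n) f (pm_one n) m\<bar> \<and>
           (\<forall>i \<in> S \<inter> {i. f i = m}.
              (HZ_act (2 ^ n) f (pm_one n) m > 0 \<longrightarrow> i \<in> A_plus n) \<and>
              (HZ_act (2 ^ n) f (pm_one n) m < 0 \<longrightarrow> i \<in> A_minus n))"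
  shows "act R (2 ^ n) k f (gpow R r n)
         = act R (2 ^ n) k (\<lambda>i. if i \<in> S then f i else 0) (gpow R r n)"
proof -
  have bal: "\<forall>m. m \<noteq> 0 \<longrightarrow> card {x\<in>{1..2^n}. x \<notin> S \<and> f x = m \<and> x \<in> A_plus n}
                          = card {x\<in>{1..2^n}. x \<notin> S \<and> f x = m \<and> x \<in> A_minus n}"
  proof (intro allI impI)
    fix m :: nat assume m0: "m \<noteq> 0"
    show "card {x\<in>{1..2^n}. x \<notin> S \<and> f x = m \<and> x \<in> A_plus n}
                          = card {x\<in>{1..2^n}. x \<notin> S \<and> f x = m \<and> x \<in> A_minus n}"
    proof (cases "m \<le> k")
      case False
      then have "{x\<in>{1..2^n}. f x = m} = {}" using assms(3) unfolding pmap_def by auto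
      then show ?thesis by (metis (mono_tags, lifting) Collect_empty_eq mem_Collect_eq)
    next
      case True
      then have mk: "m \<in> {1..k}" using m0 by auto
      define FP where "FP = {x\<in>{1..2^n}. f x = m \<and> x \<in> A_plus n}"
      define FM where "FM = {x\<in>{1..2^n}. f x = m \<and> x \<in> A_minus n}"
      define SP where "SP = {x\<in>S. f x = m \<and> x \<in> A_plus n}"
      define SM where "SM = {x\<in>S. f x = m \<and> x \<in> A_minus n}"
      define H where "H = HZ_act (2 ^ n) f (pm_one n) m"
      have fin: "finite FP" "finite FM" unfolding FP_def FM_def by auto
      have sub: "SP \<subseteq> FP" "SM \<subseteq> FM" unfolding SP_def SM_def FP_def FM_def using assms(4) by auto
      have e1: "{x\<in>{1..2^n}. x \<notin> S \<and> f x = m \<and> x \<in> A_plus n} = FP - SP"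
        unfolding FP_def SP_def by auto
      have e2: "{x\<in>{1..2^n}. x \<notin> S \<and> f x = m \<and> x \<in> A_minus n} = FM - SM"
        unfolding FM_def SM_def by auto
      have c1: "card (FP - SP) = card FP - card SP" using card_Diff_subset[OF finite_subset[OF sub(1) fin(1)] sub(1)] .
      have c2: "card (FM - SM) = card FM - card SM" using card_Diff_subset[OF finite_subset[OF sub(2) fin(2)] sub(2)] .
      have le: "card SP \<le> card FP" "card SM \<le> card FM" using card_mono fin sub by auto
      have U: "S \<inter> {i. f i = m} = SP \<union> SM" unfolding SP_def SM_def using assms(4) A_facts(2) by blast
      have D: "SP \<inter> SM = {}" unfolding SP_def SM_def using A_facts(1) by blast
      have cS: "card (S \<inter> {i. f i = m}) = card SP + card SM"
        unfolding U using card_Un_disjoint[OF finite_subset[OF sub(1) fin(1)] finite_subset[OF sub(2) fin(2)] D] .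
      have Hs: "H = int (card FP) - int (card FM)" unfolding H_def FP_def FM_def by (rule HZ_split)
      have A5: "card SP + card SM = nat \<bar>H\<bar>"
        "\<forall>i \<in> S \<inter> {i. f i = m}. (H > 0 \<longrightarrow> i \<in> A_plus n) \<and> (H < 0 \<longrightarrow> i \<in> A_minus n)"
        using assms(5) mk cS unfolding H_def by auto
      consider "H > 0" | "H < 0" | "H = 0" by linarith
      then have "card FP - card SP = card FM - card SM"
      proof cases
        case 1
        then have "SM = {}" using A5(2) A_facts(1) unfolding SM_def by blast
        then show ?thesis using A5(1) Hs 1 le by auto
      next
        case 2
        then have "SP = {}" using A5(2) A_facts(1) unfolding SP_def by blast
        then show ?thesis using A5(1) Hs 2 le by auto
      next
        case 3
        then show ?thesis using A5(1) Hs le by auto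
      qed
      then show ?thesis unfolding e1 e2 c1 c2 .
    qed
  qed
  show ?thesis using main[OF assms(1,2,4) refl assms(3) _ bal] by simp
qed

end
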